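(* Fix $1<p<2$. There exist solutions $g,h$ on $[0,\infty)$ of the system (S) described in the context such that $g(0)+2(3-p)h(0)<0$, $h>0$ and $\frac{dg}{dt}+h>0$ on all of $[0,\infty)$, and, as $r\to\infty$ (where $t=w_s(r)$), \[ g=-r-\frac{4}{3-p}+O(r^{-1}),\qquad h=\frac{r}{3-p}+1+O(r^{-1}). \]
   Context: Mass 2 spatial Schwarzschild: $(\mathbb{R}^3\setminus B_1(0),g_s=(1+1/r)^4\delta_{ij})$, $r=|x|$. Let $u_s$ be the radial solution of $\operatorname{div}_{g_s}(|\nabla u_s|^{p-2}\nabla u_s)=0$ with $u_s=1$ at $r=1$, $u_s\to0$ as $r\to\infty$; $w_s=(1-p)\log u_s$, and $r\mapsto t=w_s(r)$ is an increasing bijection $[1,\infty)\to[0,\infty)$ used to regard functions of $t$ as functions of $r$. $W_s(t)=\int_{\{w_s=t\}}|\nabla w_s|_{g_s}^2\,da_{g_s}$. System (S) for functions $g,h$ of $t$: $\left(\frac{dg}{dt}+h\right)W_s^2+\left(g-2(p-2)h+(p-1)(3-p)\frac{dh}{dt}\right)W_s\frac{dW_s}{dt}+\frac{(p-1)(5-p)}{4}h\left(\frac{dW_s}{dt}\right)^2=0$ and $\left(\frac{dg}{dt}+h\right)W_s^2-\frac{(p-1)(5-p)}{4}h\left(\frac{dW_s}{dt}\right)^2=0$. *)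

theory Defs
  imports "HOL-Analysis.Analysis" "HOL-Library.Landau_Symbols"
begin

text \<open>Conformal factor of the mass 2 spatial Schwarzschild metric g_s = (1+1/r)^4 delta.\<close>
definition schw_phi :: "real \<Rightarrow> real" where
  "schw_phi r = 1 + 1 / r"

text \<open>For a radial function u the p-Laplace equation div_{g_s}(|grad u|^{p-2} grad u) = 0
  reads (r^2 phi^{6-2p} |u'|^{p-2} u')' = 0, i.e. -u' = c (phi^{2p-6} r^{-2})^{1/(p-1)}.
  schw_dens is this profile of -u' (up to the constant c).\<close>
definition schw_dens :: "real \<Rightarrow> real \<Rightarrow> real" where
  "schw_dens p r = (schw_phi r powr (2*p - 6) / r^2) powr (1 / (p - 1))"

definition u_s :: "real \<Rightarrow> real \<Rightarrow> real" where
  "u_s p r = integral {r..} (schw_dens p) / integral {1..} (schw_dens p)"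

definition w_s :: "real \<Rightarrow> real \<Rightarrow> real" where
  "w_s p r = (1 - p) * ln (u_s p r)"

definition r_of_t :: "real \<Rightarrow> real \<Rightarrow> real" where
  "r_of_t p t = (THE r. 1 \<le> r \<and> w_s p r = t)"

text \<open>W_s(t) = integral over the level set {w_s = t} (the coordinate sphere of radius r = r(t))
  of |grad w_s|^2_{g_s} da_{g_s}.  On that sphere |grad w_s|_{g_s} = phi^{-2} |w_s'(r)| is
  constant and the g_s-area is 4 pi r^2 phi^4.\<close>
definition W_s :: "real \<Rightarrow> real \<Rightarrow> real" where
  "W_s p t = (let r = r_of_t p t in
     4 * pi * r^2 * schw_phi r ^ 4 * (schw_phi r powr (-2) * \<bar>deriv (w_s p) r\<bar>)^2)"

end

theory Submission
  imports Defs
begin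

lemma cmp_nonneg:
  fixes \<psi> \<psi>' :: "real \<Rightarrow> real"
  assumes d: "\<And>x. x \<ge> c \<Longrightarrow> (\<psi> has_real_derivative \<psi>' x) (at x)"
    and n: "\<And>x. x \<ge> c \<Longrightarrow> \<psi>' x \<le> 0"
    and l: "(\<psi> \<longlongrightarrow> 0) at_top"
  shows "\<psi> c \<ge> 0"
proof -
  have *: "\<psi> y \<le> \<psi> c" if "y \<ge> c" for y
    using that by (intro DERIV_nonpos_imp_nonincreasing[where f=\<psi>]) (auto intro: d n)
  have "\<forall>\<^sub>F y in at_top. \<psi> y \<le> \<psi> c"
    using eventually_ge_at_top[of c] by eventually_elim (rule *)
  then show ?thesis using l by (intro tendsto_upperbound) auto
qed

lemma cmp_pos:
  fixes \<psi> \<psi>' :: "real \<Rightarrow> real"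
  assumes d: "\<And>x. x \<ge> c \<Longrightarrow> (\<psi> has_real_derivative \<psi>' x) (at x)"
    and n: "\<And>x. x \<ge> c \<Longrightarrow> \<psi>' x < 0"
    and l: "(\<psi> \<longlongrightarrow> 0) at_top"
  shows "\<psi> c > 0"
proof -
  have "\<psi> (c+1) \<ge> 0"
  proof (rule cmp_nonneg[where \<psi>=\<psi> and c="c+1" and \<psi>'=\<psi>', OF _ _ l])
    fix x assume "c + 1 \<le> x"
    then show "(\<psi> has_real_derivative \<psi>' x) (at x)" "\<psi>' x \<le> 0"
      using d[of x] n[of x] by auto
  qed
  moreover have "\<psi> (c+1) < \<psi> c"
    by (rule DERIV_neg_imp_decreasing) (auto intro: d n)
  ultimately show ?thesis by simp
qed

lemma alg_system:
  fixes p s q \<beta> \<beta>d Dv Ev gg ggd Wr H Hd G Gd Wt :: real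
  assumes sp: "s = p - 1" and s0: "s \<noteq> 0"
    and gge: "gg = -(2-s)*(\<beta>d - \<beta>*Dv) + (4-s)*Ev*\<beta>"
    and ggde: "ggd = 2*Dv*gg + (4-s)*Ev^2*\<beta>"
    and H_def: "H = \<beta>*q" and Hd_def: "Hd = \<beta>d*q + \<beta>*(-1 - Dv*q)"
    and G_def: "G = -2*(2-s)*H + gg*q^2"
    and Gd_def: "Gd = -2*(2-s)*Hd + ggd*q^2 + 2*gg*q*(-1 - Dv*q)"
    and Wt_def: "Wt = Wr*(2/s)*(1 - Ev*q)"
  shows "(Gd*q/s + H) * Wr^2 + (G - 2*(p-2)*H + (p-1)*(3-p)*(Hd*q/s)) * Wr * Wt
           + (p-1)*(5-p)/4 * H * Wt^2 = 0"
    and "(Gd*q/s + H) * Wr^2 - (p-1)*(5-p)/4 * H * Wt^2 = 0"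
proof -
  have p: "p = s + 1" using sp by simp
  show "(Gd*q/s + H) * Wr^2 - (p-1)*(5-p)/4 * H * Wt^2 = 0"
    unfolding G_def Gd_def H_def Hd_def Wt_def p ggde gge using s0
    apply (simp add: divide_simps) by algebra
  show "(Gd*q/s + H) * Wr^2 + (G - 2*(p-2)*H + (p-1)*(3-p)*(Hd*q/s)) * Wr * Wt
           + (p-1)*(5-p)/4 * H * Wt^2 = 0"
    unfolding G_def Gd_def H_def Hd_def Wt_def p ggde gge using s0
    apply (simp add: divide_simps) by algebra
qed

definition "bnd (f::real\<Rightarrow>real) \<longleftrightarrow> (\<exists>C. \<forall>r\<ge>1. \<bar>f r\<bar> \<le> C)"
definition "sml (f::real\<Rightarrow>real) \<longleftrightarrow> (\<exists>C. \<forall>r\<ge>1. \<bar>f r\<bar> \<le> C / r)"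

lemma bnd_const: "bnd (\<lambda>r. c)" unfolding bnd_def by auto

lemma bnd_add: assumes "bnd f" "bnd g" shows "bnd (\<lambda>r. f r + g r)"
proof -
  obtain A B where "\<forall>r\<ge>1. \<bar>f r\<bar> \<le> A" "\<forall>r\<ge>1. \<bar>g r\<bar> \<le> B" using assms unfolding bnd_def by blast
  then have "\<forall>r\<ge>1. \<bar>f r + g r\<bar> \<le> A + B" by (smt (verit))
  then show ?thesis unfolding bnd_def by blast
qed

lemma bnd_diff: assumes "bnd f" "bnd g" shows "bnd (\<lambda>r. f r - g r)"
proof -
  obtain A B where "\<forall>r\<ge>1. \<bar>f r\<bar> \<le> A" "\<forall>r\<ge>1. \<bar>g r\<bar> \<le> B" using assms unfolding bnd_def by blast
  then have "\<forall>r\<ge>1. \<bar>f r - g r\<bar> \<le> A + B" by (smt (verit))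
  then show ?thesis unfolding bnd_def by blast
qed

lemma bnd_mult: assumes "bnd f" "bnd g" shows "bnd (\<lambda>r. f r * g r)"
proof -
  obtain A B where A: "\<forall>r\<ge>1. \<bar>f r\<bar> \<le> A" and B: "\<forall>r\<ge>1. \<bar>g r\<bar> \<le> B"
    using assms unfolding bnd_def by blast
  have "\<bar>f r * g r\<bar> \<le> A * B" if "r \<ge> 1" for r
    unfolding abs_mult using A B that by (intro mult_mono) auto
  then show ?thesis unfolding bnd_def by blast
qed

lemma sml_add: assumes "sml f" "sml g" shows "sml (\<lambda>r. f r + g r)"
proof -
  obtain A B where "\<forall>r\<ge>1. \<bar>f r\<bar> \<le> A / r" "\<forall>r\<ge>1. \<bar>g r\<bar> \<le> B / r" using assms unfolding sml_def by blast
  then have "\<forall>r\<ge>1. \<bar>f r + g r\<bar> \<le> (A + B) / r" by (simp add: add_divide_distrib) (smt (verit))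
  then show ?thesis unfolding sml_def by blast
qed

lemma sml_diff: assumes "sml f" "sml g" shows "sml (\<lambda>r. f r - g r)"
proof -
  obtain A B where "\<forall>r\<ge>1. \<bar>f r\<bar> \<le> A / r" "\<forall>r\<ge>1. \<bar>g r\<bar> \<le> B / r" using assms unfolding sml_def by blast
  then have "\<forall>r\<ge>1. \<bar>f r - g r\<bar> \<le> (A + B) / r" by (simp add: add_divide_distrib) (smt (verit))
  then show ?thesis unfolding sml_def by blast
qed

lemma sml_bnd_mult: assumes "sml f" "bnd g" shows "sml (\<lambda>r. f r * g r)"
proof -
  obtain A B where A: "\<forall>r\<ge>1. \<bar>f r\<bar> \<le> A / r" and B: "\<forall>r\<ge>1. \<bar>g r\<bar> \<le> B"
    using assms unfolding sml_def bnd_def by blast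
  have "\<bar>f r * g r\<bar> \<le> (A * B) / r" if "r \<ge> 1" for r
  proof -
    have "\<bar>f r * g r\<bar> \<le> (A / r) * B"
      unfolding abs_mult using A B that by (intro mult_mono) auto
    then show ?thesis by simp
  qed
  then show ?thesis unfolding sml_def by blast
qed

lemma sml_cmult: "sml f \<Longrightarrow> sml (\<lambda>r. c * f r)"
  using sml_bnd_mult[of f "\<lambda>_. c"] bnd_const by (simp add: mult.commute)

lemma sml_imp_bnd: assumes "sml f" shows "bnd f"
proof -
  obtain A where A: "\<forall>r\<ge>1. \<bar>f r\<bar> \<le> A / r" using assms unfolding sml_def by blast
  have "\<bar>f r\<bar> \<le> \<bar>A\<bar>" if "r \<ge> 1" for r
  proof -
    have "A / r \<le> \<bar>A\<bar> / r" using that by (intro divide_right_mono) auto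
    also have "\<dots> \<le> \<bar>A\<bar>" using that by (simp add: divide_le_eq mult_le_cancel_left1)
    finally show ?thesis using A that by auto
  qed
  then show ?thesis unfolding bnd_def by blast
qed

lemma sml_y: "sml (\<lambda>r. 1/r)" unfolding sml_def by (rule exI[of _ 1]) auto

lemma sml_cong: "(\<And>r. r \<ge> 1 \<Longrightarrow> f r = g r) \<Longrightarrow> sml g \<Longrightarrow> sml f"
  unfolding sml_def by auto

lemma bnd_cong: "(\<And>r. r \<ge> 1 \<Longrightarrow> f r = g r) \<Longrightarrow> bnd g \<Longrightarrow> bnd f"
  unfolding bnd_def by auto

lemma sml_bigo: assumes "sml f" shows "f \<in> O[at_top](\<lambda>r. 1/r)"
proof -
  obtain A where A: "\<forall>r\<ge>1. \<bar>f r\<bar> \<le> A / r" using assms unfolding sml_def by blast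
  have "\<forall>\<^sub>F r in at_top. norm (f r) \<le> A * norm (1/r)"
    using eventually_ge_at_top[of "1::real"] by eventually_elim (use A in auto)
  then show ?thesis by (rule bigoI)
qed

locale schw =
  fixes p :: real
  assumes p1: "1 < p" and p2: "p < 2"
begin

definition "s = p - 1"
definition "m = 3 - p"
definition "ea = -2*m/s"
definition "eb = 2*(1-s)/s"

lemma s_pos: "0 < s" and s_lt1: "s < 1" and m_eq: "m = 2 - s" and m_pos: "0 < m"
  using p1 p2 by (auto simp: s_def m_def)

lemma ea_neg: "ea < 0" and eb_pos: "eb > 0" and eab: "ea + eb = -2/s"
proof -
  show "ea < 0" using s_pos m_pos unfolding ea_def
    by (simp add: divide_neg_pos)
  show "eb > 0" using s_pos s_lt1 unfolding eb_def
    by simp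
  show "ea + eb = -2/s" using s_pos unfolding ea_def eb_def m_eq
    by (simp add: field_simps)
qed

definition "dens x = schw_dens p x"
definition "e0 = -2/s"
definition "D x = 2*(1 - s - x)/(s*x*(x+1))"

lemma dens_exp: assumes "x > 0" shows "dens x = exp (ea * ln (x+1) + eb * ln x)"
proof -
  define A where "A = 1 + 1/x"
  have A: "A > 0" using assms by (simp add: A_def add_pos_pos)
  have lnA: "ln A = ln (x+1) - ln x"
  proof -
    have "A = (x+1)/x" using assms unfolding A_def by (simp add: field_simps)
    then show ?thesis using assms by (simp add: ln_div)
  qed
  define B where "B = A powr (2*p-6) / x^2"
  have B: "B > 0" using A assms unfolding B_def by simp
  have lnB: "ln B = (2*p-6) * ln A - 2 * ln x"
    using A assms unfolding B_def by (simp add: ln_div ln_powr ln_realpow)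
  have "dens x = B powr (1/(p-1))"
    by (simp only: dens_def schw_dens_def schw_phi_def A_def B_def)
  also have "\<dots> = exp ((1/(p-1)) * ln B)"
    using B by (simp add: powr_def)
  also  have e1: "p - 1 = s" "2*p-6 = -2*m" unfolding s_def m_def by simp_all
  have "(1/(p-1)) * ln B = ea * ln (x+1) + eb * ln x"
    unfolding lnB lnA e1 using s_pos unfolding ea_def eb_def m_eq by (simp add: field_simps)
  finally show ?thesis .
qed

lemma dens_pos: "x > 0 \<Longrightarrow> dens x > 0"
  by (simp add: dens_exp)

lemma D_eq: assumes "x > 0" shows "D x = ea/(x+1) + eb/x"
proof -
  have "x + 1 > 0" using assms by auto
  then show ?thesis using assms s_pos unfolding D_def ea_def eb_def m_eq
    apply (simp add: divide_simps) by algebra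
qed

lemma dens_deriv: assumes "x > 0" shows "(dens has_real_derivative dens x * D x) (at x)"
proof -
  have "((\<lambda>x. exp (ea * ln (x+1) + eb * ln x)) has_real_derivative
        exp (ea * ln (x+1) + eb * ln x) * (ea * (1/(x+1)) + eb * (1/x))) (at x)"
    using assms by (auto intro!: derivative_eq_intros)
  then have "((\<lambda>x. exp (ea * ln (x+1) + eb * ln x)) has_real_derivative dens x * D x) (at x)"
    using assms by (simp add: dens_exp D_eq)
  then show ?thesis
    by (rule has_field_derivative_transform_within_open[where S="{0<..}"])
       (use assms in \<open>auto simp: dens_exp\<close>)
qed

lemma dens_isCont: "x > 0 \<Longrightarrow> isCont dens x"
  using dens_deriv DERIV_isCont by blast

lemma dens_cont: "c > 0 \<Longrightarrow> continuous_on {c..} dens"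
  by (intro continuous_at_imp_continuous_on ballI dens_isCont) auto

lemma dens_cont': "c > 0 \<Longrightarrow> continuous_on {c..d} dens"
  by (intro continuous_at_imp_continuous_on ballI dens_isCont) auto

lemma dens_le: assumes "x > 0" shows "dens x \<le> x powr e0"
proof -
  have "ea * ln (x+1) \<le> ea * ln x"
    using assms ea_neg by (intro mult_left_mono_neg) auto
  then have "dens x \<le> exp ((ea + eb) * ln x)"
    using assms by (simp add: dens_exp algebra_simps)
  then show ?thesis using assms by (simp add: eab powr_def e0_def)
qed

lemma e_lt: "e0 < -1" using s_pos s_lt1 unfolding e0_def by (simp add: field_simps)

lemma powr_int: "c > 0 \<Longrightarrow> ((\<lambda>x. x powr e0) has_integral -(c powr (e0+1)) / (e0+1)) {c..}"
  by (rule has_integral_powr_to_inf) (use e_lt in auto)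

lemma dens_integrable: assumes "c > 0" shows "dens integrable_on {c..}"
proof (rule measurable_bounded_by_integrable_imp_integrable)
  show "dens \<in> borel_measurable (lebesgue_on {c..})"
    using assms by (intro continuous_imp_measurable_on_sets_lebesgue dens_cont) auto
  show "(\<lambda>x. x powr e0) integrable_on {c..}" using powr_int[OF assms] by blast
  show "norm (dens x) \<le> x powr e0" if "x \<in> {c..}" for x
    using that assms dens_le[of x] dens_pos[of x] by auto
qed auto

definition "I x = integral {x..} dens"

lemma I_nonneg: "c > 0 \<Longrightarrow> I c \<ge> 0"
  unfolding I_def using dens_integrable
  by (intro integral_nonneg) (auto intro!: less_imp_le[OF dens_pos])

lemma I_le: assumes "c > 0" shows "I c \<le> -(c powr (e0+1)) / (e0+1)"
proof -
  have "I c \<le> integral {c..} (\<lambda>x. x powr e0)"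
    unfolding I_def using assms powr_int[OF assms] dens_integrable[OF assms]
    by (intro integral_le) (auto intro!: dens_le)
  then show ?thesis using powr_int[OF assms] integral_unique by metis
qed

lemma I_tendsto: "(I \<longlongrightarrow> 0) at_top"
proof (rule tendsto_sandwich[where f="\<lambda>_. 0" and h="\<lambda>c. -(c powr (e0+1)) / (e0+1)"])
  show "\<forall>\<^sub>F n in at_top. 0 \<le> I n"
    using eventually_gt_at_top[of 0] by eventually_elim (rule I_nonneg)
  show "\<forall>\<^sub>F n in at_top. I n \<le> -(n powr (e0+1)) / (e0+1)"
    using eventually_gt_at_top[of 0] by eventually_elim (rule I_le)
  have lim: "((\<lambda>c. c powr (e0+1)) \<longlongrightarrow> 0) at_top"
    using e_lt by (intro tendsto_neg_powr filterlim_ident) auto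
  then show "((\<lambda>c. -(c powr (e0+1)) / (e0+1)) \<longlongrightarrow> 0) at_top"
    using tendsto_minus[OF tendsto_divide_zero[OF lim, of "e0+1"]] by simp
qed auto

lemma I_split: assumes "0 < x" "x \<le> M" shows "I x = integral {x..M} dens + I M"
proof -
  have "(dens has_integral (integral {x..M} dens + I M)) ({x..M} \<union> {M..})"
  proof (rule has_integral_Un)
    show "(dens has_integral integral {x..M} dens) {x..M}"
      using assms by (intro integrable_integral integrable_continuous_interval dens_cont') auto
    show "(dens has_integral I M) {M..}"
      unfolding I_def using assms by (intro integrable_integral dens_integrable) auto
    have "{x..M} \<inter> {M..} = {M}" using assms by auto
    then show "negligible ({x..M} \<inter> {M..})" by simp
  qed
  moreover have "{x..M} \<union> {M..} = {x..}" using assms by auto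
  ultimately show ?thesis unfolding I_def using integral_unique by metis
qed

lemma I_deriv: assumes "x > 0" shows "(I has_real_derivative - dens x) (at x)"
proof -
  have "((\<lambda>y. integral {y..x+1} dens) has_real_derivative - dens x) (at x within {x/2..x+1})"
    using assms by (intro integral_has_real_derivative' dens_cont') auto
  then have "((\<lambda>y. integral {y..x+1} dens + I (x+1)) has_real_derivative - dens x) (at x)"
    using assms by (subst (asm) at_within_Icc_at) (auto intro!: derivative_eq_intros)
  then show ?thesis
    by (rule has_field_derivative_transform_within_open[where S="{x/2<..<x+1}"])
       (use assms in \<open>auto intro!: I_split[symmetric]\<close>)
qed


definition "k = s/m"
definition "q x = I x / dens x"

lemma k_pos: "k > 0" using s_pos m_pos unfolding k_def by simp

lemma q_deriv: assumes "x > 0" shows "(q has_real_derivative (-1 - D x * q x)) (at x)"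
proof -
  have "(q has_real_derivative ((- dens x) * dens x - I x * (dens x * D x)) / (dens x * dens x)) (at x)"
    unfolding q_def[abs_def] using assms dens_pos[OF assms]
    by (intro DERIV_divide I_deriv dens_deriv) auto
  moreover have "((- dens x) * dens x - I x * (dens x * D x)) / (dens x * dens x) = -1 - D x * q x"
    using dens_pos[OF assms] unfolding q_def by (simp add: field_simps)
  ultimately show ?thesis by (rule DERIV_cong)
qed

lemma Phi_dens_lim:
  assumes "\<forall>\<^sub>F x in at_top. 0 \<le> \<Phi> x \<and> \<Phi> x \<le> C * x"
  shows "((\<lambda>x. \<Phi> x * dens x) \<longlongrightarrow> 0) at_top"
proof (rule tendsto_sandwich[where f="\<lambda>_. 0" and h="\<lambda>x. C * x powr (e0+1)"])
  show "\<forall>\<^sub>F x in at_top. 0 \<le> \<Phi> x * dens x"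
    using assms eventually_gt_at_top[of 0]
    by eventually_elim (auto intro!: mult_nonneg_nonneg less_imp_le[OF dens_pos])
  show "\<forall>\<^sub>F x in at_top. \<Phi> x * dens x \<le> C * x powr (e0+1)"
    using assms eventually_gt_at_top[of 0]
  proof eventually_elim
    case (elim x)
    have "\<Phi> x * dens x \<le> (C * x) * x powr e0"
      using elim dens_le[of x] dens_pos[of x] by (intro mult_mono) auto
    also have "\<dots> = C * x powr (e0+1)" using elim by (simp add: powr_add)
    finally show ?case .
  qed
  have "((\<lambda>c. c powr (e0+1)) \<longlongrightarrow> 0) at_top"
    using e_lt by (intro tendsto_neg_powr filterlim_ident) auto
  then show "((\<lambda>x. C * x powr (e0+1)) \<longlongrightarrow> 0) at_top"
    using tendsto_mult_right_zero by blast
qed auto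

lemma id0: assumes "x > 0" shows "1 + k + (k*x + s) * D x = 2*(1-s)/(x*(x+1))"
proof -
  have "x + 1 > 0" using assms by auto
  then show ?thesis using assms s_pos m_pos unfolding D_def k_def m_eq
    apply (simp add: divide_simps) by algebra
qed

lemma id1: assumes "x > 0" shows "(k - 1/x^2) + (k*x + s + 1/x) * D x + 1
   = (-(2 - s + 2* s^2)*x + (2 - 3* s)) / (s*x^2*(x+1))"
proof -
  have "x + 1 > 0" using assms by auto
  then show ?thesis using assms s_pos m_pos unfolding D_def k_def m_eq
    apply (simp add: divide_simps) by algebra
qed

lemma id2: assumes "x > 1" shows "k*(x^2-2*x-1)/(x-1)^2 + (k*x*(x+1)/(x-1)) * D x + 1
   = -2* s*x/((2-s)*(x-1)^2)"
proof -
  have "x + 1 > 0" "x - 1 > 0" "2 - s > 0" using assms s_lt1 by auto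
  then show ?thesis using assms s_pos m_pos unfolding D_def k_def m_eq
    apply (simp add: divide_simps) by algebra
qed

lemma q_lower: assumes "c > 0" shows "q c \<ge> k*c + s"
proof -
  define \<psi> where "\<psi> x = I x - (k*x + s) * dens x" for x
  have "\<psi> c \<ge> 0"
  proof (rule cmp_nonneg[where \<psi>=\<psi> and c=c and \<psi>'="\<lambda>x. - dens x * (1 + k + (k*x + s) * D x)"])
    fix x assume "x \<ge> c"
    then have x: "x > 0" using assms by simp
    show "(\<psi> has_real_derivative - dens x * (1 + k + (k*x + s) * D x)) (at x)"
      unfolding \<psi>_def[abs_def] using x
      by (auto intro!: derivative_eq_intros I_deriv dens_deriv simp: algebra_simps)
    have "1 + k + (k*x + s) * D x \<ge> 0" using x s_lt1 by (simp add: id0)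
    then show "- dens x * (1 + k + (k*x + s) * D x) \<le> 0"
      using dens_pos[OF x] by simp
  next
    have "\<forall>\<^sub>F x in at_top. 0 \<le> k*x+s \<and> k*x+s \<le> (k+s)*x"
      using eventually_ge_at_top[of 1]
      by eventually_elim (use k_pos s_pos in \<open>auto simp: algebra_simps intro: mult_left_mono[of 1, simplified]\<close>)
    then have "((\<lambda>x. (k*x + s) * dens x) \<longlongrightarrow> 0) at_top"
      by (rule Phi_dens_lim)
    then show "(\<psi> \<longlongrightarrow> 0) at_top"
      unfolding \<psi>_def using I_tendsto tendsto_diff by fastforce
  qed
  then show ?thesis unfolding \<psi>_def q_def using dens_pos[OF assms]
    by (simp add: field_simps)
qed


lemma q_upper: assumes "c \<ge> 1" shows "q c \<le> k*c + s + 1/c"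
proof -
  define \<Phi> where "\<Phi> x = k*x + s + 1/x" for x
  define \<Phi>' where "\<Phi>' x = k - 1/x^2" for x
  have \<Phi>d: "(\<Phi> has_real_derivative \<Phi>' x) (at x)" if "x > 0" for x
    unfolding \<Phi>_def[abs_def] \<Phi>'_def using that
    by (auto intro!: derivative_eq_intros simp: power2_eq_square field_simps)
  define \<psi> where "\<psi> x = \<Phi> x * dens x - I x" for x
  have "\<psi> c \<ge> 0"
  proof (rule cmp_nonneg[where \<psi>=\<psi> and c=c and
      \<psi>'="\<lambda>x. dens x * (\<Phi>' x + \<Phi> x * D x + 1)"])
    fix x assume "x \<ge> c"
    then have x: "x \<ge> 1" "x > 0" using assms by auto
    have "(\<psi> has_real_derivative \<Phi>' x * dens x + (dens x * D x) * \<Phi> x - (- dens x)) (at x)"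
      unfolding \<psi>_def[abs_def] using x
      by (intro DERIV_diff DERIV_mult I_deriv dens_deriv \<Phi>d) auto
    then show "(\<psi> has_real_derivative dens x * (\<Phi>' x + \<Phi> x * D x + 1)) (at x)"
      by (simp add: algebra_simps)
    have c0: "2 - s + 2 * s^2 > 0" using s_pos s_lt1 by (simp add: add_pos_nonneg)
    define A where "A = 2 - s + 2 * s^2"
    have "A * 1 \<le> A * x"
      using x c0 unfolding A_def by (intro mult_left_mono) auto
    then have "-A*x + (2 - 3 * s) \<le> -A + (2 - 3 * s)" by simp
    also have "\<dots> < 0"
    proof -
      have "s * s > 0" using s_pos by simp
      then show ?thesis unfolding A_def power2_eq_square using s_pos by linarith
    qed
    finally have "-(2 - s + 2 * s^2)*x + (2 - 3 * s) < 0" unfolding A_def .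
    moreover have "s*x^2*(x+1) > 0" using x s_pos by simp
    ultimately have "\<Phi>' x + \<Phi> x * D x + 1 \<le> 0"
      using x unfolding \<Phi>_def \<Phi>'_def by (simp add: id1 divide_neg_pos less_imp_le)
    then show "dens x * (\<Phi>' x + \<Phi> x * D x + 1) \<le> 0"
      using dens_pos[OF x(2)] by (simp add: mult_nonneg_nonpos)
  next
    have "\<forall>\<^sub>F x in at_top. 0 \<le> \<Phi> x \<and> \<Phi> x \<le> (k+s+1)*x"
      using eventually_ge_at_top[of 1]
    proof eventually_elim
      case (elim x)
      have f: "1/x \<le> 1" "s \<le> s * x" "1 \<le> x" "0 < 1/x" "0 < k * x" using elim s_pos k_pos by auto
      have "k*x + s + 1/x \<le> k*x + s*x + x" using f by linarith
      then have "\<Phi> x \<le> (k+s+1)*x" unfolding \<Phi>_def by (simp add: algebra_simps)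
      moreover have "0 \<le> \<Phi> x" unfolding \<Phi>_def using f s_pos by linarith
      ultimately show ?case by simp
    qed
    then have "((\<lambda>x. \<Phi> x * dens x) \<longlongrightarrow> 0) at_top"
      by (rule Phi_dens_lim)
    then show "(\<psi> \<longlongrightarrow> 0) at_top"
      unfolding \<psi>_def using I_tendsto tendsto_diff by fastforce
  qed
  then show ?thesis unfolding \<psi>_def q_def \<Phi>_def using dens_pos[of c] assms
    by (simp add: field_simps)
qed

lemma Phi2_deriv: assumes "x > 1"
  shows "((\<lambda>x. k*x*(x+1)/(x-1)) has_real_derivative k*(x^2-2*x-1)/(x-1)^2) (at x)"
proof -
  have "((\<lambda>x. k*x*(x+1)/(x-1)) has_real_derivative
     ((k*(x+1) + k*x) * (x-1) - k*x*(x+1)) / ((x-1)*(x-1))) (at x)"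
    using assms by (auto intro!: derivative_eq_intros)
  moreover have "((k*(x+1) + k*x) * (x-1) - k*x*(x+1)) / ((x-1)*(x-1)) = k*(x^2-2*x-1)/(x-1)^2"
    by (simp add: power2_eq_square algebra_simps)
  ultimately show ?thesis by simp
qed

lemma q_upperL: assumes "c > 1" shows "q c < k*c*(c+1)/(c-1)"
proof -
  define \<Phi> where "\<Phi> x = k*x*(x+1)/(x-1)" for x
  define \<Phi>' where "\<Phi>' x = k*(x^2-2*x-1)/(x-1)^2" for x
  have \<Phi>d: "(\<Phi> has_real_derivative \<Phi>' x) (at x)" if "x > 1" for x
    unfolding \<Phi>_def[abs_def] \<Phi>'_def using Phi2_deriv[OF that] .
  define \<psi> where "\<psi> x = \<Phi> x * dens x - I x" for x
  have "\<psi> c > 0"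
  proof (rule cmp_pos[where \<psi>=\<psi> and c=c and
      \<psi>'="\<lambda>x. dens x * (\<Phi>' x + \<Phi> x * D x + 1)"])
    fix x assume "x \<ge> c"
    then have x: "x > 1" "x > 0" using assms by auto
    have "(\<psi> has_real_derivative \<Phi>' x * dens x + (dens x * D x) * \<Phi> x - (- dens x)) (at x)"
      unfolding \<psi>_def[abs_def] using x
      by (intro DERIV_diff DERIV_mult I_deriv dens_deriv \<Phi>d) auto
    then show "(\<psi> has_real_derivative dens x * (\<Phi>' x + \<Phi> x * D x + 1)) (at x)"
      by (simp add: algebra_simps)
    have "-2 * s*x/((2-s)*(x-1)^2) < 0"
      using x s_pos s_lt1 by (intro divide_neg_pos) auto
    then have "\<Phi>' x + \<Phi> x * D x + 1 < 0" unfolding \<Phi>_def \<Phi>'_def using id2[OF x(1)] by simp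
    then show "dens x * (\<Phi>' x + \<Phi> x * D x + 1) < 0"
      using dens_pos[OF x(2)] by (simp add: mult_pos_neg)
  next
    have "\<forall>\<^sub>F x in at_top. 0 \<le> \<Phi> x \<and> \<Phi> x \<le> (3*k)*x"
      using eventually_ge_at_top[of 2]
    proof eventually_elim
      case (elim x)
      have "x + 1 \<le> 3*(x-1)" using elim by simp
      then have "k*x*(x+1) \<le> (3*k*x)*(x-1)"
        using elim k_pos by (simp add: algebra_simps mult_left_mono)
      then show ?case using elim k_pos unfolding \<Phi>_def by (auto simp: divide_simps)
    qed
    then have "((\<lambda>x. \<Phi> x * dens x) \<longlongrightarrow> 0) at_top"
      by (rule Phi_dens_lim)
    then show "(\<psi> \<longlongrightarrow> 0) at_top"
      unfolding \<psi>_def using I_tendsto tendsto_diff by fastforce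
  qed
  then show ?thesis unfolding \<psi>_def q_def \<Phi>_def using dens_pos[of c] assms
    by (simp add: field_simps)
qed

lemma I_pos: assumes "x > 0" shows "I x > 0"
proof -
  have "q x > 0" using q_lower[OF assms] k_pos s_pos assms
    by (smt (verit) mult_pos_pos)
  then show ?thesis using dens_pos[OF assms] unfolding q_def by (simp add: zero_less_divide_iff)
qed

lemma q_pos: "x > 0 \<Longrightarrow> q x > 0"
  using I_pos dens_pos unfolding q_def by simp

lemma dens_fun: "schw_dens p = dens" by (rule ext) (simp add: dens_def)

lemma u_eq: "u_s p x = I x / I 1"
  unfolding u_s_def I_def dens_fun ..

lemma w_eq: "w_s p x = - s * ln (I x / I 1)"
  unfolding w_s_def u_eq s_def by simp

lemma w_deriv: assumes "x > 0" shows "(w_s p has_real_derivative s / q x) (at x)"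
proof -
  have "((\<lambda>x. - s * ln (I x / I 1)) has_real_derivative - s * ((- dens x / I 1) / (I x / I 1))) (at x)"
    using assms I_pos[OF assms] I_pos[of 1]
    by (auto intro!: derivative_eq_intros I_deriv)
  moreover have "- s * ((- dens x / I 1) / (I x / I 1)) = s / q x"
    using I_pos[OF assms] I_pos[of 1] dens_pos[OF assms] unfolding q_def by (simp add: field_simps)
  ultimately show ?thesis unfolding w_eq[abs_def] by simp
qed

lemma w_mono: "0 < x \<Longrightarrow> x < y \<Longrightarrow> w_s p x < w_s p y"
  by (rule DERIV_pos_imp_increasing[of x y]) (auto intro!: exI w_deriv divide_pos_pos s_pos q_pos)

lemma w_inj: "0 < x \<Longrightarrow> 0 < y \<Longrightarrow> w_s p x = w_s p y \<Longrightarrow> x = y"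
  using w_mono by (metis less_irrefl linorder_neqE_linordered_idom)

lemma w_1: "w_s p 1 = 0"
  using I_pos[of 1] by (simp add: w_eq)

lemma w_isCont: "x > 0 \<Longrightarrow> isCont (w_s p) x"
  using w_deriv DERIV_isCont by blast

lemma w_top: "filterlim (w_s p) at_top at_top"
proof -
  have "((\<lambda>x. I x / I 1) \<longlongrightarrow> 0) at_top"
    using tendsto_divide_zero[OF I_tendsto] by simp
  moreover have "\<forall>\<^sub>F x in at_top. I x / I 1 > 0"
    using eventually_gt_at_top[of 0] by eventually_elim (use I_pos[of 1] I_pos in auto)
  ultimately have "filterlim (\<lambda>x. I x / I 1) (at_right 0) at_top"
    by (rule tendsto_imp_filterlim_at_right)
  then have "filterlim (\<lambda>x. ln (I x / I 1)) at_bot at_top"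
    by (rule filterlim_compose[OF ln_at_0])
  then have "filterlim (\<lambda>x. - ln (I x / I 1)) at_top at_top"
    by (simp add: filterlim_uminus_at_bot)
  then have "filterlim (\<lambda>x. s * (- ln (I x / I 1))) at_top at_top"
    using s_pos by (intro filterlim_tendsto_pos_mult_at_top[OF tendsto_const]) auto
  then show ?thesis unfolding w_eq[abs_def] by simp
qed


definition "E r = -(1/r + D r)"
definition "Z r = (r^2-1)/(s*r^2)"
definition "Zd r = 2/(s*r^3)"
definition "P r = (r+1)^2/(2*r)"
definition "Pd r = (r^2-1)/(2*r^2)"
definition "Q r = -m*(r^2-1)/(2* s*r^2)"
definition "Qd r = -m/(s*r^3)"
definition "g2Z r = m*(m*r^2 - 4*r + m)/(s^2*r^3)"
definition "g2Zd r = m*(-m*r^2 + 8*r - 3*m)/(s^2*r^4)"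
definition "X2 r = m^2*(r^2-1)/(2* s*r^2)"
definition "X2d r = m^2/(s*r^3)"

lemma E_eq: "r > 0 \<Longrightarrow> E r = m*(r-1)/(s*r*(r+1))"
  unfolding E_def D_def m_eq using s_pos apply (simp add: divide_simps) by algebra

lemma Z_deriv: "r > 0 \<Longrightarrow> (Z has_real_derivative Zd r) (at r)"
  unfolding Z_def[abs_def] Zd_def using s_pos
  apply (auto intro!: derivative_eq_intros)
  apply (simp add: divide_simps) by algebra

lemma P_deriv: "r > 0 \<Longrightarrow> (P has_real_derivative Pd r) (at r)"
  unfolding P_def[abs_def] Pd_def
  apply (auto intro!: derivative_eq_intros)
  apply (simp add: divide_simps) by algebra

lemma Q_deriv: "r > 0 \<Longrightarrow> (Q has_real_derivative Qd r) (at r)"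
  unfolding Q_def[abs_def] Qd_def using s_pos
  apply (auto intro!: derivative_eq_intros)
  apply (simp add: divide_simps) by algebra

lemma g2Z_deriv: "r > 0 \<Longrightarrow> (g2Z has_real_derivative g2Zd r) (at r)"
  unfolding g2Z_def[abs_def] g2Zd_def using s_pos
  apply (auto intro!: derivative_eq_intros)
  apply (simp add: divide_simps) by algebra

lemma X2_deriv: "r > 0 \<Longrightarrow> (X2 has_real_derivative X2d r) (at r)"
  unfolding X2_def[abs_def] X2d_def using s_pos
  apply (auto intro!: derivative_eq_intros)
  apply (simp add: divide_simps) by algebra

lemma rid1: "r > 0 \<Longrightarrow> Pd r + P r * D r - Q r = -(r+1)/r^2"
  unfolding Pd_def P_def D_def Q_def m_eq using s_pos apply (simp add: divide_simps) by algebra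

lemma rid2: "r > 0 \<Longrightarrow> g2Zd r = 2*D r*g2Z r + (4-s)*E r^2*Z r"
  unfolding g2Zd_def g2Z_def D_def E_def Z_def m_eq using s_pos apply (simp add: divide_simps) by algebra

lemma rid3: "r > 0 \<Longrightarrow> X2d r + X2 r * D r + (m/2)*g2Z r = 2*D r*X2 r + (4-s)*E r^2*P r"
  unfolding X2d_def X2_def g2Z_def D_def E_def P_def m_eq using s_pos apply (simp add: divide_simps) by algebra

lemma rid4: "r > 0 \<Longrightarrow> g2Z r = -m*(Zd r - Z r*D r) + (4-s)*E r*Z r"
  unfolding g2Z_def Zd_def Z_def D_def E_def m_eq using s_pos apply (simp add: divide_simps) by algebra

lemma rid5: "r > 0 \<Longrightarrow> X2 r = -m*(-(r+1)/r^2 - P r*D r) + (4-s)*E r*P r"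
  unfolding X2_def P_def D_def E_def m_eq using s_pos apply (simp add: divide_simps) by algebra

lemma rid6: "r > 0 \<Longrightarrow> -(m/2)*g2Z r = -m*(-m/(s*r^3) - Q r*D r) + (4-s)*E r*Q r"
  unfolding g2Z_def Q_def D_def E_def m_eq using s_pos apply (simp add: divide_simps) by algebra

lemma QZ: "r > 0 \<Longrightarrow> Q r = -(m/2) * Z r" unfolding Q_def Z_def using s_pos
  by (simp add: divide_simps)
lemma Qd_eq: "r > 0 \<Longrightarrow> Qd r = -(m/2) * Zd r" unfolding Qd_def Zd_def by (simp add: field_simps)


definition "I1 = I 1"
lemma I1_pos: "I1 > 0" unfolding I1_def using I_pos by simp

definition "beta r = Z r + (P r * dens r + Q r * I r)/I1"
definition "betad r = Zd r + (-(r+1)/r^2 * dens r - m/(s*r^3) * I r)/I1"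
definition "g2 r = g2Z r + (X2 r * dens r - (m/2)*g2Z r * I r)/I1"
definition "g2d r = 2*D r*g2 r + (4-s)*E r^2*beta r"

lemma beta_deriv: assumes "r > 0" shows "(beta has_real_derivative betad r) (at r)"
proof -
  have "(beta has_real_derivative
     Zd r + ((Pd r * dens r + (dens r * D r) * P r) + (Qd r * I r + (- dens r) * Q r)) / I1) (at r)"
    unfolding beta_def[abs_def] using assms
    by (intro DERIV_add DERIV_mult DERIV_cdivide Z_deriv P_deriv Q_deriv dens_deriv I_deriv)
  moreover have "Zd r + ((Pd r * dens r + (dens r * D r) * P r) + (Qd r * I r + (- dens r) * Q r)) / I1
     = Zd r + ((Pd r + P r * D r - Q r) * dens r + Qd r * I r) / I1"
    by (simp add: algebra_simps)
  moreover have "\<dots> = betad r" unfolding betad_def rid1[OF assms] Qd_def by (simp add: algebra_simps)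
  ultimately show ?thesis by simp
qed

lemma g2_deriv: assumes "r > 0" shows "(g2 has_real_derivative g2d r) (at r)"
proof -
  have "(g2 has_real_derivative
     g2Zd r + ((X2d r * dens r + (dens r * D r) * X2 r) - ((m/2 * g2Zd r) * I r + (- dens r) * ((m/2) * g2Z r))) / I1) (at r)"
    unfolding g2_def[abs_def] using assms
    by (intro DERIV_add DERIV_diff DERIV_mult DERIV_cdivide DERIV_cmult g2Z_deriv X2_deriv dens_deriv I_deriv)
  moreover
  have X2d: "X2d r = 2*D r*X2 r + (4-s)*E r^2*P r - X2 r * D r - (m/2)*g2Z r"
    using rid3[OF assms] by simp
  have "g2Zd r + ((X2d r * dens r + (dens r * D r) * X2 r) - ((m/2 * g2Zd r) * I r + (- dens r) * ((m/2) * g2Z r))) / I1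
      = g2d r"
    unfolding g2d_def g2_def beta_def rid2[OF assms] X2d QZ[OF assms] using I1_pos
    apply (simp add: divide_simps) by algebra
  ultimately show ?thesis by simp
qed

lemma g2_rel: assumes "r > 0" shows "g2 r = -m*(betad r - beta r * D r) + (4-s)*E r*beta r"
proof -
  have e: "g2 r = g2Z r + (X2 r * dens r + (-(m/2)*g2Z r) * I r)/I1"
    unfolding g2_def by (simp add: algebra_simps)
  show ?thesis
    unfolding e  unfolding rid6[OF assms] rid5[OF assms]
    unfolding rid4[OF assms] betad_def beta_def using I1_pos s_pos assms
    apply (simp add: divide_simps) by algebra
qed


definition "Rt t = (THE r. 0 < r \<and> w_s p r = t)"

lemma Rt_w: "r > 0 \<Longrightarrow> Rt (w_s p r) = r"
  unfolding Rt_def by (rule the_equality) (auto intro: w_inj)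

lemma w_cont_on: "0 < a \<Longrightarrow> continuous_on {a..b} (w_s p)"
  by (intro continuous_at_imp_continuous_on ballI w_isCont) auto

lemma w_ivt: assumes "0 < a" "a \<le> b" "w_s p a \<le> y" "y \<le> w_s p b"
  shows "\<exists>x. a \<le> x \<and> x \<le> b \<and> w_s p x = y"
  using IVT'[of "w_s p" a y b] assms w_cont_on[of a b] by auto

lemma w_surj: assumes "t \<ge> 0" shows "\<exists>r\<ge>1. w_s p r = t"
proof -
  have "\<forall>\<^sub>F x in at_top. t \<le> w_s p x" using w_top by (simp add: filterlim_at_top)
  then obtain R where R: "\<And>x. x \<ge> R \<Longrightarrow> t \<le> w_s p x" by (auto simp: eventually_at_top_linorder)
  have "t \<le> w_s p (max R 1)" by (rule R) simp
  then obtain x where "1 \<le> x" "w_s p x = t"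
    using w_ivt[of 1 "max R 1" t] assms w_1 by auto
  then show ?thesis by auto
qed

lemma r_of_t_eq: assumes "t \<ge> 0"
  shows "r_of_t p t = Rt t" "Rt t \<ge> 1" "w_s p (Rt t) = t"
proof -
  obtain r where r: "r \<ge> 1" "w_s p r = t" using w_surj[OF assms] by auto
  have "Rt t = r" using Rt_w[of r] r by auto
  moreover have "r_of_t p t = r" unfolding r_of_t_def
    by (rule the_equality) (use r in \<open>auto intro: w_inj\<close>)
  ultimately show "r_of_t p t = Rt t" "Rt t \<ge> 1" "w_s p (Rt t) = t" using r by auto
qed

lemma Rt_deriv: assumes "t \<ge> 0" shows "(Rt has_real_derivative q (Rt t) / s) (at t)"
proof -
  define r where "r = Rt t"
  have r: "r \<ge> 1" "w_s p r = t" using r_of_t_eq[OF assms] unfolding r_def by auto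
  have "(Rt has_real_derivative inverse (s / q r)) (at t)"
  proof (rule DERIV_inverse_function[where f="w_s p" and a="w_s p (1/2)" and b="w_s p (r+1)"])
    show "(w_s p has_real_derivative s / q r) (at (Rt t))" unfolding r_def[symmetric]
      using r by (intro w_deriv) auto
    show "s / q r \<noteq> 0" using s_pos q_pos[of r] r by auto
    show "w_s p (1/2) < t" using w_mono[of "1/2" r] r by auto
    show "t < w_s p (r+1)" using w_mono[of r "r+1"] r by auto
    show "w_s p (Rt y) = y" if "w_s p (1/2) < y" "y < w_s p (r+1)" for y
    proof -
      have "\<exists>x. 1/2 \<le> x \<and> x \<le> r+1 \<and> w_s p x = y"
        by (rule w_ivt) (use that r in auto)
      then obtain x where "1/2 \<le> x" "w_s p x = y" by auto
      then show ?thesis using Rt_w[of x] by auto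
    qed
    have "isCont Rt (w_s p r)"
      by (rule isCont_inverse_function2[where a="1/2" and b="r+1"])
         (use r in \<open>auto intro: Rt_w w_isCont\<close>)
    then show "isCont Rt t" using r by simp
  qed
  then show ?thesis unfolding r_def using s_pos by simp
qed

lemma r_of_t_deriv: assumes "t \<ge> 0"
  shows "(r_of_t p has_real_derivative q (r_of_t p t) / s) (at t within {0..})"
proof -
  have "(Rt has_real_derivative q (Rt t) / s) (at t within {0..})"
    using Rt_deriv[OF assms] by (rule has_field_derivative_at_within)
  then show ?thesis unfolding r_of_t_eq(1)[OF assms]
    by (rule has_field_derivative_transform_within[where d=1])
       (use assms in \<open>auto simp: r_of_t_eq\<close>)
qed

lemma phi_simp: assumes "(r::real) > 0"
  shows "schw_phi r ^ 4 * (schw_phi r powr (-2) * a)^2 = a^2"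
proof -
  have f: "schw_phi r > 0" unfolding schw_phi_def using assms by (simp add: add_pos_pos)
  define y where "y = schw_phi r"
  have y: "y > 0" using f unfolding y_def .
  have "y powr (-2) = 1 / y ^ 2"
    using y by (simp add: powr_neg_numeral)
  moreover have "(y^2)^2 = y^4" by (simp flip: power_mult)
  moreover have "y^4 * (1 / y ^ 2 * a)^2 = a^2 * (y^4 / (y^2)^2)"
    by (simp add: power_mult_distrib power_divide)
  ultimately show ?thesis unfolding y_def[symmetric] using y by simp
qed

definition "Wr r = 4*pi* s^2*(r*r)/(q r * q r)"
definition "Wd r = Wr r * (2/q r) * (1 - E r * q r)"

lemma W_eq: assumes "t \<ge> 0" shows "W_s p t = Wr (r_of_t p t)"
proof -
  define r where "r = r_of_t p t"
  have r: "r \<ge> 1" using r_of_t_eq[OF assms] unfolding r_def by simp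
  have d: "deriv (w_s p) r = s / q r" using r by (intro DERIV_imp_deriv w_deriv) auto
  have "\<bar>s / q r\<bar> = s / q r" using s_pos q_pos[of r] r by simp
  moreover have "4 * pi * r^2 * schw_phi r ^ 4 * (schw_phi r powr (-2) * (s / q r))^2
      = 4 * pi * r^2 * (schw_phi r ^ 4 * (schw_phi r powr (-2) * (s / q r))^2)"
    by (simp only: mult.assoc)
  ultimately have "W_s p t = 4 * pi * r^2 * (s / q r)^2"
    unfolding W_s_def Let_def r_def[symmetric] d using phi_simp[of r "s / q r"] r by simp
  then show ?thesis unfolding Wr_def r_def[symmetric] using q_pos[of r] r
    by (simp add: power2_eq_square)
qed

lemma Wr_deriv: assumes "r > 0" shows "(Wr has_real_derivative Wd r) (at r)"
proof -
  have "(Wr has_real_derivative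
      ((4*pi* s^2 * (1*r + 1*r)) * (q r * q r) - 4*pi* s^2*(r*r) * ((-1 - D r * q r) * q r + (-1 - D r * q r) * q r))
        / ((q r * q r) * (q r * q r))) (at r)"
    unfolding Wr_def[abs_def] using assms q_pos[OF assms]
    by (intro DERIV_divide DERIV_cmult DERIV_mult DERIV_ident q_deriv) auto
  moreover have "((4*pi* s^2 * (1*r + 1*r)) * (q r * q r) - 4*pi* s^2*(r*r) * ((-1 - D r * q r) * q r + (-1 - D r * q r) * q r))
        / ((q r * q r) * (q r * q r)) = Wd r"
    unfolding Wd_def Wr_def E_def using assms q_pos[OF assms]
    apply (simp add: divide_simps) by algebra
  ultimately show ?thesis by simp
qed


definition "H r = beta r * q r"
definition "Hd r = betad r * q r + beta r * (-1 - D r * q r)"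
definition "G r = -2*m*H r + g2 r * (q r)^2"
definition "Gd r = -2*m*Hd r + g2d r*(q r)^2 + 2*g2 r*q r*(-1 - D r*q r)"

lemma H_deriv: assumes "r > 0" shows "(H has_real_derivative Hd r) (at r)"
proof -
  have "(H has_real_derivative betad r * q r + (-1 - D r * q r) * beta r) (at r)"
    unfolding H_def[abs_def] using assms by (intro DERIV_mult beta_deriv q_deriv)
  then show ?thesis unfolding Hd_def by (simp add: algebra_simps)
qed

lemma G_deriv: assumes "r > 0" shows "(G has_real_derivative Gd r) (at r)"
proof -
  have q2: "((\<lambda>x. (q x)^2) has_real_derivative 2 * q r * (-1 - D r * q r)) (at r)"
    using q_deriv[OF assms] by (auto intro!: derivative_eq_intros)
  have "(G has_real_derivative -2*m*Hd r + (g2d r * (q r)^2 + (2 * q r * (-1 - D r * q r)) * g2 r)) (at r)"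
    unfolding G_def[abs_def] using assms
    by (intro DERIV_add DERIV_cmult DERIV_mult H_deriv g2_deriv q2)
  then show ?thesis unfolding Gd_def by (simp add: algebra_simps power2_eq_square)
qed

lemma Eq_lt1: assumes "r \<ge> 1" shows "E r * q r < 1"
proof (cases "r = 1")
  case True then show ?thesis by (simp add: E_eq)
next
  case False
  then have r: "r > 1" using assms by simp
  have E0: "E r > 0" using r s_pos m_pos by (simp add: E_eq)
  have rr: "r*r > 1" using r by (simp add: less_1_mult)
  have eq: "E r * (k*r*(r+1)/(r-1)) = 1"
    using r rr s_pos m_pos unfolding E_eq[of r, OF less_trans[OF zero_less_one r]] k_def
    by (simp add: field_simps)
  have "E r * q r < E r * (k*r*(r+1)/(r-1))"
    using q_upperL[OF r] E0 by (intro mult_strict_left_mono)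
  then show ?thesis using eq by linarith
qed

lemma PQ_pos: assumes "r \<ge> 1" shows "P r + Q r * q r > 0"
proof (cases "r = 1")
  case True then show ?thesis by (simp add: P_def Q_def)
next
  case False
  then have r: "r > 1" using assms by simp
  have Qn: "- Q r > 0" using r s_pos m_pos unfolding Q_def by (simp add: field_simps)
  have "(- Q r) * q r < (- Q r) * (k*r*(r+1)/(r-1))"
    using q_upperL[OF r] Qn by (intro mult_strict_left_mono)
  also have "\<dots> = P r" using r s_pos m_pos unfolding Q_def P_def k_def
    by (simp add: field_simps power2_eq_square)
  finally show ?thesis by simp
qed

lemma dq_I: assumes "r > 0" shows "dens r * q r = I r"
  using dens_pos[OF assms] unfolding q_def by simp

lemma H_alt: assumes "r > 0" shows "H r = Z r * q r + (I r / I1) * (P r + Q r * q r)"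
proof -
  have "H r = Z r * q r + (P r * (dens r * q r) + Q r * I r * q r) / I1"
    unfolding H_def beta_def using I1_pos by (simp add: field_simps)
  also have "\<dots> = Z r * q r + (P r * I r + Q r * I r * q r)/I1" by (simp only: dq_I[OF assms])
  also have "\<dots> = Z r * q r + (I r / I1) * (P r + Q r * q r)" using I1_pos by (simp add: field_simps)
  finally show ?thesis .
qed

lemma H_pos: assumes "r \<ge> 1" shows "H r > 0"
proof -
  have r: "r > 0" using assms by simp
  have "Z r \<ge> 0" using assms s_pos unfolding Z_def by (simp add: one_le_power)
  then have "Z r * q r \<ge> 0" using q_pos[OF r] by simp
  moreover have "(I r / I1) * (P r + Q r * q r) > 0"
    using I_pos[OF r] I1_pos PQ_pos[OF assms] by simp
  ultimately show ?thesis unfolding H_alt[OF r] by simp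
qed

lemma g2_1: "g2 1 = - m"
  unfolding g2_def g2Z_def X2_def I1_def[symmetric] using I1_pos s_pos unfolding m_eq
  apply (simp add: divide_simps) by algebra

lemma GH_1: "G 1 + 2*m * H 1 = - m * (q 1)^2"
  unfolding G_def using g2_1 by simp


definition "dl r = q r - k*r - s"

lemma dl_bounds: assumes "r \<ge> 1" shows "0 \<le> dl r" "dl r \<le> 1/r"
  using q_lower[of r] q_upper[OF assms] assms unfolding dl_def by auto

lemma sml_dl: "sml dl"
  unfolding sml_def by (rule exI[of _ 1]) (use dl_bounds in \<open>auto simp: abs_le_iff\<close>)

lemma bnd_dl: "bnd dl" using sml_dl by (rule sml_imp_bnd)
lemma bnd_y: "bnd (\<lambda>r. 1/r)" using sml_y by (rule sml_imp_bnd)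

lemma u_bound: assumes "r \<ge> 1" shows "0 \<le> I r / I1" "I r / I1 \<le> ((k+s+1)/I1) / r"
proof -
  have r: "r > 0" using assms by simp
  show "0 \<le> I r / I1" using I_pos[OF r] I1_pos by simp
  have e: "e0 \<le> -2" unfolding e0_def using s_pos s_lt1 by (simp add: field_simps)
  have "dens r \<le> r powr e0" using dens_le[OF r] .
  also have "\<dots> \<le> r powr (-2)" using e assms by (intro powr_mono) auto
  also have "\<dots> = 1/r^2" using r by (simp add: powr_neg_numeral)
  finally have d: "dens r \<le> 1/r^2" .
  have qb: "q r \<le> (k+s+1)*r"
  proof -
    have h1: "1/r \<le> 1" and h2: "s \<le> s*r" and h3: "1 \<le> r" using assms s_pos by auto
    have h4: "1/r \<le> r" using h1 h3 by linarith
    have "k*r + s + 1/r \<le> k*r + s*r + r" using h2 h4 by (intro add_mono order.refl)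
    also have "\<dots> = (k+s+1)*r" by (simp add: algebra_simps)
    finally show ?thesis using q_upper[OF assms] by linarith
  qed
  have "I r = dens r * q r" using dq_I[OF r] by simp
  also have "\<dots> \<le> (1/r^2) * ((k+s+1)*r)"
    using d qb q_pos[OF r] dens_pos[OF r] by (intro mult_mono) auto
  also have "\<dots> = (k+s+1)/r" using r by (simp add: power2_eq_square)
  finally have "I r / I1 \<le> ((k+s+1)/r) / I1" by (rule divide_right_mono) (use I1_pos in auto)
  moreover have "((k+s+1)/r) / I1 = ((k+s+1)/I1) / r" by (simp add: ac_simps)
  ultimately show "I r / I1 \<le> ((k+s+1)/I1) / r" by (rule ord_le_eq_trans)
qed

lemma sml_u: "sml (\<lambda>r. I r / I1)"
  unfolding sml_def
proof (rule exI[of _ "(k+s+1)/I1"], intro allI impI)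
  fix r :: real assume "r \<ge> 1"
  then show "\<bar>I r / I1\<bar> \<le> (k+s+1)/I1 / r" using u_bound[of r] by (subst abs_of_nonneg) auto
qed

lemma algB: assumes "r > 0"
  shows "P r + Q r * (k*r + s + d) = (2 - m + 2*(1/r) - (m/s)*d + m*((1/r)*(1/r)) + (m/s)*(d*((1/r)*(1/r))))/2"
  unfolding P_def Q_def k_def m_eq using assms s_pos s_lt1 apply (simp add: divide_simps) by algebra

lemma algZ: assumes "r > 0"
  shows "Z r * (k*r + s + d) - (r/m + 1) = (1/s)*d - (1/s)*(k*(1/r) + s*((1/r)*(1/r)) + d*((1/r)*(1/r)))"
  unfolding Z_def k_def m_eq using assms s_pos s_lt1 apply (simp add: divide_simps) by algebra

lemma algT1: assumes "r > 0"
  shows "g2Z r * (k*r + s + d)^2 - r - 2*m + 4/m = (2*m/s) * d + (1/r) * ((m/s^2) *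
     ((m*((s+d)*(s+d)) - 8*k*(s+d) + m*(k*k)) + (1/r)*(2*m*k*(s+d) - 4*((s+d)*(s+d)))
      + (1/r)*(1/r)*(m*((s+d)*(s+d)))))"
  unfolding g2Z_def k_def m_eq using assms s_pos s_lt1 apply (simp add: divide_simps) by algebra

lemma algT2: assumes "r > 0"
  shows "(k*r + s + d) * (X2 r - (m/2)*g2Z r*(k*r + s + d)) = -(m^2/(2* s^2)) * (k + (1/r)*(s + d)) *
     ((m*(s + d) - 4*k) + (1/r)*(2* s - 4*(s + d)) + (1/r)*(1/r)*(m*(s + d)))"
  unfolding g2Z_def X2_def k_def m_eq using assms s_pos s_lt1 apply (simp add: divide_simps) by algebra

lemma q_dl: "q r = k*r + s + dl r" unfolding dl_def by simp

lemma g2q2: assumes "r > 0"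
  shows "g2 r * (q r)^2 = g2Z r * (q r)^2 + (I r / I1) * (q r * (X2 r - (m/2)*g2Z r*q r))"
proof -
  have "g2 r * (q r)^2 = g2Z r * (q r)^2 + (X2 r * (dens r * q r) * q r - (m/2)*g2Z r * I r * (q r)^2)/I1"
    unfolding g2_def using I1_pos by (simp add: field_simps power2_eq_square)
  also have "\<dots> = g2Z r * (q r)^2 + (X2 r * I r * q r - (m/2)*g2Z r * I r * (q r)^2)/I1"
    by (simp only: dq_I[OF assms])
  also have "\<dots> = g2Z r * (q r)^2 + (I r / I1) * (q r * (X2 r - (m/2)*g2Z r*q r))"
    using I1_pos by (simp add: field_simps power2_eq_square)
  finally show ?thesis .
qed

lemma bnd_sd: "bnd (\<lambda>r. s + dl r)" by (intro bnd_add bnd_const bnd_dl)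

lemma sml_H: "sml (\<lambda>r. H r - (r/m + 1))"
proof (rule sml_cong)
  fix r :: real assume r: "r \<ge> 1"
  then have r0: "r > 0" by simp
  show "H r - (r/m + 1) = ((1/s)*dl r - (1/s)*(k*(1/r) + s*((1/r)*(1/r)) + dl r*((1/r)*(1/r))))
     + (I r / I1) * ((2 - m + 2*(1/r) - (m/s)*dl r + m*((1/r)*(1/r)) + (m/s)*(dl r*((1/r)*(1/r))))/2)"
  proof -
    have eZ: "Z r * q r - (r/m + 1) = (1/s)*dl r - (1/s)*(k*(1/r) + s*((1/r)*(1/r)) + dl r*((1/r)*(1/r)))"
      using algZ[OF r0, of "dl r"] unfolding q_dl[symmetric] .
    have eB: "P r + Q r * q r = (2 - m + 2*(1/r) - (m/s)*dl r + m*((1/r)*(1/r)) + (m/s)*(dl r*((1/r)*(1/r))))/2"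
      using algB[OF r0, of "dl r"] unfolding q_dl[symmetric] .
    have "H r - (r/m + 1) = (Z r * q r - (r/m + 1)) + (I r / I1) * (P r + Q r * q r)"
      unfolding H_alt[OF r0] by simp
    also have "\<dots> = ((1/s)*dl r - (1/s)*(k*(1/r) + s*((1/r)*(1/r)) + dl r*((1/r)*(1/r))))
     + (I r / I1) * ((2 - m + 2*(1/r) - (m/s)*dl r + m*((1/r)*(1/r)) + (m/s)*(dl r*((1/r)*(1/r))))/2)"
      by (simp only: eZ eB)
    finally show ?thesis .
  qed
next
  have b: "bnd (\<lambda>r. (2 - m + 2*(1/r) - (m/s)*dl r + m*((1/r)*(1/r)) + (m/s)*(dl r*((1/r)*(1/r))))/2)"
  proof -
    have "bnd (\<lambda>r. (1/2) * (2 - m + 2*(1/r) - (m/s)*dl r + m*((1/r)*(1/r)) + (m/s)*(dl r*((1/r)*(1/r)))))"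
      by (intro bnd_mult bnd_add bnd_diff bnd_const bnd_dl bnd_y)
    then show ?thesis by simp
  qed
  show "sml (\<lambda>r. ((1/s)*dl r - (1/s)*(k*(1/r) + s*((1/r)*(1/r)) + dl r*((1/r)*(1/r))))
     + (I r / I1) * ((2 - m + 2*(1/r) - (m/s)*dl r + m*((1/r)*(1/r)) + (m/s)*(dl r*((1/r)*(1/r))))/2))"
    by (intro sml_add sml_diff sml_cmult sml_dl sml_y sml_bnd_mult[OF sml_u b] sml_bnd_mult[OF sml_y] bnd_y bnd_dl
        sml_bnd_mult[OF sml_dl] bnd_mult)
qed

lemma sml_G: "sml (\<lambda>r. G r - (- r - 4/m))"
proof (rule sml_cong)
  fix r :: real assume r: "r \<ge> 1"
  then have r0: "r > 0" by simp
  have "G r - (- r - 4/m) = -2*m*(H r - (r/m + 1)) + (g2Z r * (q r)^2 - r - 2*m + 4/m)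
     + (I r / I1) * (q r * (X2 r - (m/2)*g2Z r*q r))"
    unfolding G_def g2q2[OF r0] using m_pos by (simp add: field_simps)
  also have "\<dots> = -2*m*(H r - (r/m + 1)) + ((2*m/s) * dl r + (1/r) * ((m/s^2) *
     ((m*((s+dl r)*(s+dl r)) - 8*k*(s+dl r) + m*(k*k)) + (1/r)*(2*m*k*(s+dl r) - 4*((s+dl r)*(s+dl r)))
      + (1/r)*(1/r)*(m*((s+dl r)*(s+dl r))))))
     + (I r / I1) * (-(m^2/(2* s^2)) * (k + (1/r)*(s + dl r)) *
     ((m*(s + dl r) - 4*k) + (1/r)*(2* s - 4*(s + dl r)) + (1/r)*(1/r)*(m*(s + dl r))))"
    unfolding q_dl algT1[OF r0] algT2[OF r0] ..
  finally show "G r - (- r - 4/m) = \<dots>" .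
next
  have b1: "bnd (\<lambda>r. (m/s^2) *
     ((m*((s+dl r)*(s+dl r)) - 8*k*(s+dl r) + m*(k*k)) + (1/r)*(2*m*k*(s+dl r) - 4*((s+dl r)*(s+dl r)))
      + (1/r)*(1/r)*(m*((s+dl r)*(s+dl r)))))"
    by (intro bnd_mult bnd_add bnd_diff bnd_const bnd_dl bnd_y)
  have b2: "bnd (\<lambda>r. -(m^2/(2* s^2)) * (k + (1/r)*(s + dl r)) *
     ((m*(s + dl r) - 4*k) + (1/r)*(2* s - 4*(s + dl r)) + (1/r)*(1/r)*(m*(s + dl r))))"
    by (intro bnd_mult bnd_add bnd_diff bnd_const bnd_dl bnd_y)
  show "sml (\<lambda>r. -2*m*(H r - (r/m + 1)) + ((2*m/s) * dl r + (1/r) * ((m/s^2) *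
     ((m*((s+dl r)*(s+dl r)) - 8*k*(s+dl r) + m*(k*k)) + (1/r)*(2*m*k*(s+dl r) - 4*((s+dl r)*(s+dl r)))
      + (1/r)*(1/r)*(m*((s+dl r)*(s+dl r))))))
     + (I r / I1) * (-(m^2/(2* s^2)) * (k + (1/r)*(s + dl r)) *
     ((m*(s + dl r) - 4*k) + (1/r)*(2* s - 4*(s + dl r)) + (1/r)*(1/r)*(m*(s + dl r)))))"
    by (intro sml_add sml_cmult sml_H sml_dl sml_bnd_mult[OF sml_y b1] sml_bnd_mult[OF sml_u b2])
qed

end

lemma (in schw) w_nonneg: "r \<ge> 1 \<Longrightarrow> w_s p r \<ge> 0"
  using w_mono[of 1 r] w_1 by (cases "r = 1") auto

lemma (in schw) R_w: "r \<ge> 1 \<Longrightarrow> r_of_t p (w_s p r) = r"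
  using r_of_t_eq(1)[OF w_nonneg] Rt_w by simp

lemma (in schw) R_0: "r_of_t p 0 = 1"
  using R_w[of 1] w_1 by simp

lemma (in schw) Wr_pos: "r > 0 \<Longrightarrow> Wr r > 0"
  unfolding Wr_def using q_pos[of r] s_pos by simp

theorem proposition3p11:
  fixes p :: real
  assumes "1 < p" and "p < 2"
  shows "\<exists>g h g' h' W' :: real \<Rightarrow> real.
     (\<forall>t\<ge>0. (g has_real_derivative g' t) (at t within {0..})
           \<and> (h has_real_derivative h' t) (at t within {0..})
           \<and> (W_s p has_real_derivative W' t) (at t within {0..})
           \<and> (g' t + h t) * (W_s p t)^2
               + (g t - 2*(p-2) * h t + (p-1)*(3-p) * h' t) * W_s p t * W' t
               + (p-1)*(5-p)/4 * h t * (W' t)^2 = 0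
           \<and> (g' t + h t) * (W_s p t)^2 - (p-1)*(5-p)/4 * h t * (W' t)^2 = 0)
   \<and> g 0 + 2*(3-p) * h 0 < 0
   \<and> (\<forall>t\<ge>0. h t > 0 \<and> g' t + h t > 0)
   \<and> (\<lambda>r. g (w_s p r) - (- r - 4/(3-p))) \<in> O[at_top](\<lambda>r. 1 / r)
   \<and> (\<lambda>r. h (w_s p r) - (r/(3-p) + 1)) \<in> O[at_top](\<lambda>r. 1 / r)"
proof -
  interpret schw p using assms by unfold_locales
  define R where "R = r_of_t p"
  define g where "g t = G (R t)" for t
  define h where "h t = H (R t)" for t
  define g' where "g' t = Gd (R t) * q (R t) / s" for t
  define h' where "h' t = Hd (R t) * q (R t) / s" for t
  define W' where "W' t = Wd (R t) * q (R t) / s" for t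
  have m3: "3 - p = m" unfolding m_def ..
  have Rge: "R t \<ge> 1" if "t \<ge> 0" for t
    using r_of_t_eq[OF that] unfolding R_def by simp
  have Rd: "(R has_real_derivative q (R t) / s) (at t within {0..})" if "t \<ge> 0" for t
    unfolding R_def using r_of_t_deriv[OF that] .
  have WsW: "W_s p t = Wr (R t)" if "t \<ge> 0" for t
    unfolding R_def using W_eq[OF that] .
  have sys: "(g has_real_derivative g' t) (at t within {0..})
           \<and> (h has_real_derivative h' t) (at t within {0..})
           \<and> (W_s p has_real_derivative W' t) (at t within {0..})
           \<and> (g' t + h t) * (W_s p t)^2
               + (g t - 2*(p-2) * h t + (p-1)*(3-p) * h' t) * W_s p t * W' t
               + (p-1)*(5-p)/4 * h t * (W' t)^2 = 0
           \<and> (g' t + h t) * (W_s p t)^2 - (p-1)*(5-p)/4 * h t * (W' t)^2 = 0"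
    if t: "t \<ge> 0" for t
  proof (intro conjI)
    define r where "r = R t"
    have r: "r \<ge> 1" "r > 0" using Rge[OF t] unfolding r_def by auto
    show "(g has_real_derivative g' t) (at t within {0..})"
      using DERIV_chain2[OF G_deriv[OF r(2), unfolded r_def] Rd[OF t]] unfolding g_def[abs_def] g'_def
      by simp
    show "(h has_real_derivative h' t) (at t within {0..})"
      using DERIV_chain2[OF H_deriv[OF r(2), unfolded r_def] Rd[OF t]] unfolding h_def[abs_def] h'_def
      by simp
    have "((\<lambda>x. Wr (R x)) has_real_derivative W' t) (at t within {0..})"
      using DERIV_chain2[OF Wr_deriv[OF r(2), unfolded r_def] Rd[OF t]] unfolding W'_def
      by simp
    then show "(W_s p has_real_derivative W' t) (at t within {0..})"
      by (rule has_field_derivative_transform_within[where d=1]) (use t in \<open>auto simp: WsW\<close>)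
    have q0: "q r \<noteq> 0" using q_pos[OF r(2)] by simp
    have s0: "s \<noteq> 0" using s_pos by simp
    have Wt: "W' t = Wr r * (2/s) * (1 - E r * q r)"
      unfolding W'_def r_def[symmetric] Wd_def using q0 s0 by (simp add: field_simps)
    note A = alg_system[where p=p and s=s and q="q r" and \<beta>="beta r" and \<beta>d="betad r"
      and Dv="D r" and Ev="E r" and gg="g2 r" and ggd="g2d r" and Wr="Wr r"
      and H="H r" and Hd="Hd r" and G="G r" and Gd="Gd r" and Wt="W' t",
      OF s_def s0 g2_rel[OF r(2), unfolded m_eq] g2d_def H_def Hd_def
         G_def[unfolded m_eq] Gd_def[unfolded m_eq] Wt]
    show "(g' t + h t) * (W_s p t)^2
               + (g t - 2*(p-2) * h t + (p-1)*(3-p) * h' t) * W_s p t * W' t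
               + (p-1)*(5-p)/4 * h t * (W' t)^2 = 0"
      using A(1) unfolding g_def h_def g'_def h'_def WsW[OF t] r_def[symmetric] by simp
    show "(g' t + h t) * (W_s p t)^2 - (p-1)*(5-p)/4 * h t * (W' t)^2 = 0"
      using A(2) unfolding g_def h_def g'_def h'_def WsW[OF t] r_def[symmetric] by simp
  qed
  have pos: "h t > 0 \<and> g' t + h t > 0" if t: "t \<ge> 0" for t
  proof
    define r where "r = R t"
    have r: "r \<ge> 1" "r > 0" using Rge[OF t] unfolding r_def by auto
    show hp: "h t > 0" unfolding h_def r_def[symmetric] using H_pos[OF r(1)] .
    have Wp: "W_s p t > 0" unfolding WsW[OF t] r_def[symmetric] using Wr_pos[OF r(2)] .
    have "W' t = Wr r * (2/s) * (1 - E r * q r)"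
      unfolding W'_def r_def[symmetric] Wd_def using q_pos[OF r(2)] s_pos by (simp add: field_simps)
    moreover have "Wr r * (2/s) * (1 - E r * q r) > 0"
      using Wr_pos[OF r(2)] s_pos Eq_lt1[OF r(1)] by simp
    ultimately have W'p: "W' t \<noteq> 0" by (metis less_irrefl)
    have c: "(p-1)*(5-p)/4 > 0" using assms by simp
    have "(g' t + h t) * (W_s p t)^2 = (p-1)*(5-p)/4 * h t * (W' t)^2"
      using sys[OF t] by simp
    moreover have "(p-1)*(5-p)/4 * h t * (W' t)^2 > 0"
      using c hp W'p by simp
    ultimately have "(g' t + h t) * (W_s p t)^2 > 0" by simp
    then show "g' t + h t > 0" using Wp by (simp add: zero_less_mult_iff)
  qed
  have init: "g 0 + 2*(3-p) * h 0 < 0"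
  proof -
    have "g 0 + 2*(3-p) * h 0 = - m * (q 1)^2"
      unfolding g_def h_def R_def R_0 m3 using GH_1 by simp
    also have "\<dots> < 0" using m_pos q_pos[of 1] by simp
    finally show ?thesis .
  qed
  have asG: "(\<lambda>r. g (w_s p r) - (- r - 4/(3-p))) \<in> O[at_top](\<lambda>r. 1 / r)"
    unfolding m3 by (rule sml_bigo, rule sml_cong[OF _ sml_G]) (simp add: g_def R_def R_w)
  have asH: "(\<lambda>r. h (w_s p r) - (r/(3-p) + 1)) \<in> O[at_top](\<lambda>r. 1 / r)"
    unfolding m3 by (rule sml_bigo, rule sml_cong[OF _ sml_H]) (simp add: h_def R_def R_w)
  show ?thesis
    by (rule exI[of _ g], rule exI[of _ h], rule exI[of _ g'], rule exI[of _ h'], rule exI[of _ W'])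
       (use sys pos init asG asH in blast)
qed

end
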